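(* Let $m,n\ge 1$ and let $U=\begin{pmatrix}1&1\\0&1\end{pmatrix}$, $V=\begin{pmatrix}1&0\\1&1\end{pmatrix}$ (representing, under an identification $\mathrm{Mod}(T^2)\cong\mathrm{SL}(2,\mathbb{Z})$, the mapping classes $\tau_a^{-1}$ and $\tau_b$, where $\tau_a,\tau_b$ are Dehn twists about simple closed curves $a,b$ on the torus with geometric intersection number $1$). Among all words consisting of exactly $m$ letters $U$ and $n$ letters $V$ in any order, the word $U^mV^n$ (i.e. $\tau_a^{-m}\tau_b^n$, up to cyclic permutation) has the smallest stable translation length on the Farey graph $\mathcal{F}$. Moreover, $l_{\mathcal{C}}(U^mV^n)\le 2$.
   Context: The Farey graph $\mathcal{F}$ (the curve graph of the torus) has vertex set $\mathbb{Q}\cup\{\infty\}$, $p/q$ and $r/s$ adjacent iff $|ps-qr|=1$, with path metric $d_{\mathcal{C}}$ of unit edge lengths; $\begin{pmatrix}a&b\\c&d\end{pmatrix}\in\mathrm{SL}(2,\mathbb{Z})$ acts by $p/q\mapsto (ap+bq)/(cp+dq)$. The stable translation length of $g$ is $l_{\mathcal{C}}(g)=\liminf_{j\to\infty} d_{\mathcal{C}}(v,g^j(v))/j$ for any vertex $v$. Every word in the letters $U,V$ containing both letters is an Anosov element (absolute trace $>2$). *)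

theory Defs
  imports "HOL-Analysis.Analysis"
begin

text \<open>Vertices of the Farey graph: Q \<union> {\<infinity>}, with p/q represented by the coprime pair (p,q)
  normalised to q > 0, and \<infinity> represented by (1,0).\<close>
definition farey_vertex :: "int \<times> int \<Rightarrow> bool" where
  "farey_vertex v = (case v of (p, q) \<Rightarrow> coprime p q \<and> (q > 0 \<or> (q = 0 \<and> p = 1)))"

definition farey_inf :: "int \<times> int" where
  "farey_inf = (1, 0)"

definition farey_adj :: "int \<times> int \<Rightarrow> int \<times> int \<Rightarrow> bool" where
  "farey_adj v w = (farey_vertex v \<and> farey_vertex w \<and>
     (case v of (p, q) \<Rightarrow> case w of (r, s) \<Rightarrow> \<bar>p * s - q * r\<bar> = 1))"

text \<open>Path metric with unit edge lengths (the Farey graph is connected).\<close>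
definition farey_dist :: "int \<times> int \<Rightarrow> int \<times> int \<Rightarrow> nat" where
  "farey_dist v w = (LEAST k. (farey_adj ^^ k) v w)"

text \<open>2x2 integer matrices (a,b,c,d) = [[a,b],[c,d]].\<close>
type_synonym mat2 = "int \<times> int \<times> int \<times> int"

definition mat2_mult :: "mat2 \<Rightarrow> mat2 \<Rightarrow> mat2" where
  "mat2_mult M N = (case M of (a, b, c, d) \<Rightarrow> case N of (e, f, g, h) \<Rightarrow>
     (a * e + b * g, a * f + b * h, c * e + d * g, c * f + d * h))"

definition mat2_id :: mat2 where "mat2_id = (1, 0, 0, 1)"

definition farey_norm :: "int \<times> int \<Rightarrow> int \<times> int" where
  "farey_norm v = (case v of (x, y) \<Rightarrow> if y < 0 \<or> (y = 0 \<and> x < 0) then (- x, - y) else (x, y))"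

definition mat2_act :: "mat2 \<Rightarrow> int \<times> int \<Rightarrow> int \<times> int" where
  "mat2_act M v = (case M of (a, b, c, d) \<Rightarrow> case v of (p, q) \<Rightarrow>
     farey_norm (a * p + b * q, c * p + d * q))"

definition matU :: mat2 where "matU = (1, 1, 0, 1)"
definition matV :: mat2 where "matV = (1, 0, 1, 1)"

definition letter :: "bool \<Rightarrow> mat2" where
  "letter x = (if x then matU else matV)"

definition word_mat :: "bool list \<Rightarrow> mat2" where
  "word_mat w = foldr (\<lambda>x M. mat2_mult (letter x) M) w mat2_id"

definition stable_len :: "mat2 \<Rightarrow> ereal" where
  "stable_len g = liminf (\<lambda>j::nat. ereal (real (farey_dist farey_inf ((mat2_act g ^^ j) farey_inf)) / real j))"

end

theory Submission
  imports Defs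
begin


definition app :: "mat2 \<Rightarrow> int \<times> int \<Rightarrow> int \<times> int" where
  "app M v = (case M of (a,b,c,d) \<Rightarrow> case v of (p,q) \<Rightarrow> (a * p+b * q, c * p+d * q))"
definition mdet :: "mat2 \<Rightarrow> int" where
  "mdet M = (case M of (a,b,c,d) \<Rightarrow> a * d - b * c)"
definition det2 :: "int\<times>int \<Rightarrow> int\<times>int \<Rightarrow> int" where
  "det2 u v = (case u of (p,q) \<Rightarrow> case v of (r,s) \<Rightarrow> p * s - q * r)"
definition cf :: "mat2 \<Rightarrow> int \<times> int \<Rightarrow> int \<times> int" where
  "cf M v = (case M of (a,b,c,d) \<Rightarrow> case v of (x,y) \<Rightarrow> (d * x - b * y, a * y - c * x))"
definition sd :: "mat2 \<Rightarrow> int \<times> int \<Rightarrow> int" where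
  "sd M v = fst (cf M v) * snd (cf M v)"

lemma act_app: "mat2_act M v = farey_norm (app M v)"
  by (cases M; cases v; simp add: mat2_act_def app_def)

lemma norm_neg: "farey_norm (-a, -b) = farey_norm (a, b)"
  by (auto simp: farey_norm_def)

lemma norm_cases: "farey_norm v = v \<or> farey_norm v = (- fst v, - snd v)"
  by (cases v; simp add: farey_norm_def)

lemma app_neg: "app M (-a,-b) = (- fst (app M (a,b)), - snd (app M (a,b)))"
  by (cases M; simp add: app_def algebra_simps)

lemma act_norm: "farey_norm (app M (farey_norm v)) = farey_norm (app M v)"
proof -
  obtain a b where v: "v = (a,b)" by fastforce
  have h: "farey_norm (app M (-a,-b)) = farey_norm (app M (a,b))"
    by (simp only: app_neg norm_neg prod.collapse)
  show ?thesis using norm_cases[of v] h v by auto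
qed

lemma app_mult: "app (mat2_mult M N) v = app M (app N v)"
  by (cases M; cases N; cases v; simp add: app_def mat2_mult_def algebra_simps)

lemma mult_assoc: "mat2_mult (mat2_mult A B) C = mat2_mult A (mat2_mult B C)"
  by (cases A; cases B; cases C; simp add: mat2_mult_def algebra_simps)

lemma mult_id: "mat2_mult mat2_id M = M"
  by (cases M; simp add: mat2_mult_def mat2_id_def)

lemma mdet_mult: "mdet (mat2_mult A B) = mdet A * mdet B"
  by (cases A; cases B; simp add: mat2_mult_def mdet_def algebra_simps)

lemma cf_app: assumes "mdet M = 1" shows "cf M (app M v) = v"
proof -
  obtain a b c d where M: "M = (a,b,c,d)" by (cases M) auto
  obtain p q where v: "v = (p,q)" by fastforce
  have h: "a * d - b * c = 1" using assms M by (simp add: mdet_def)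
  have "d * (a * p + b * q) - b * (c * p + d * q) = (a * d - b * c) * p" by (simp add: algebra_simps)
  moreover have "a * (c * p + d * q) - c * (a * p + b * q) = (a * d - b * c) * q" by (simp add: algebra_simps)
  ultimately show ?thesis using h by (simp add: M v cf_def app_def)
qed

lemma app_cf: assumes "mdet M = 1" shows "app M (cf M v) = v"
proof -
  obtain a b c d where M: "M = (a,b,c,d)" by (cases M) auto
  obtain p q where v: "v = (p,q)" by fastforce
  have h: "a * d - b * c = 1" using assms M by (simp add: mdet_def)
  have "a * (d * p - b * q) + b * (a * q - c * p) = (a * d - b * c) * p" by (simp add: algebra_simps)
  moreover have "c * (d * p - b * q) + d * (a * q - c * p) = (a * d - b * c) * q" by (simp add: algebra_simps)
  ultimately show ?thesis using h by (simp add: M v cf_def app_def)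
qed

lemma det2_app: "det2 (app M u) (app M v) = mdet M * det2 u v"
  by (cases M; cases u; cases v; simp add: det2_def app_def mdet_def algebra_simps)

lemma det2_cf: "mdet M = 1 \<Longrightarrow> det2 (cf M u) (cf M v) = det2 u v"
  using det2_app[of M "cf M u" "cf M v"] by (simp add: app_cf)

lemma abs_det2_norm1: "\<bar>det2 (farey_norm u) v\<bar> = \<bar>det2 u v\<bar>"
  using norm_cases[of u] by (cases u; cases v; auto simp: det2_def algebra_simps)

lemma abs_det2_norm2: "\<bar>det2 u (farey_norm v)\<bar> = \<bar>det2 u v\<bar>"
  using norm_cases[of v] by (cases u; cases v; auto simp: det2_def algebra_simps)

lemma adj_det: "farey_adj x y \<longleftrightarrow> farey_vertex x \<and> farey_vertex y \<and> \<bar>det2 x y\<bar> = 1"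
  by (cases x; cases y; simp add: farey_adj_def det2_def)

lemma coprime_lin:
  fixes p q a b c d :: int
  assumes "coprime p q" "a * d - b * c = 1"
  shows "coprime (a * p+b * q) (c * p+d * q)"
proof -
  obtain u v where uv: "u * p + v * q = gcd p q" using bezout_int by blast
  hence "u * p + v * q = 1" using assms(1) by simp
  hence "(u * d - v * c) * (a * p+b * q) + (v * a - u * b) * (c * p+d * q) = 1"
  proof -
    have "(u * d - v * c) * (a * p+b * q) + (v * a - u * b) * (c * p+d * q) = (a * d - b * c) * (u * p + v * q)" by (simp add: algebra_simps)
    thus ?thesis using assms(2) \<open>u * p + v * q = 1\<close> by simp
  qed
  thus ?thesis
    by (metis coprime_iff_gcd_eq_1 dvd_add dvd_mult gcd_dvd1 gcd_dvd2 is_unit_gcd)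
qed

lemma vertex_norm:
  assumes "coprime a (b::int)" shows "farey_vertex (farey_norm (a,b))"
proof -
  consider "b > 0" | "b < 0" | "b = 0" by linarith
  thus ?thesis
  proof cases
    case 1 thus ?thesis using assms by (auto simp: farey_norm_def farey_vertex_def)
  next
    case 2 thus ?thesis using assms by (auto simp: farey_norm_def farey_vertex_def)
  next
    case 3
    hence "\<bar>a\<bar> = 1" using assms by simp
    hence "a = 1 \<or> a = -1" by linarith
    thus ?thesis
    proof
      assume "a = 1" thus ?thesis using 3 by (simp add: farey_norm_def farey_vertex_def)
    next
      assume "a = -1" thus ?thesis using 3 by (simp add: farey_norm_def farey_vertex_def)
    qed
  qed
qed

lemma vertex_coprime: "farey_vertex (p,q) \<Longrightarrow> coprime p q"
  by (simp add: farey_vertex_def)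

lemma vertex_act: assumes "farey_vertex v" "mdet M = 1" shows "farey_vertex (mat2_act M v)"
proof -
  obtain a b c d where M: "M = (a,b,c,d)" by (cases M) auto
  obtain p q where v: "v = (p,q)" by fastforce
  have "coprime p q" using assms(1) v vertex_coprime by simp
  moreover have "a * d - b * c = 1" using assms(2) M by (simp add: mdet_def)
  ultimately have "coprime (a * p+b * q) (c * p+d * q)" by (rule coprime_lin)
  hence "farey_vertex (farey_norm (a * p+b * q, c * p+d * q))" by (rule vertex_norm)
  thus ?thesis by (simp add: act_app M v app_def)
qed

lemma adj_act: assumes "farey_adj x y" "mdet M = 1" shows "farey_adj (mat2_act M x) (mat2_act M y)"
proof -
  have "\<bar>det2 (mat2_act M x) (mat2_act M y)\<bar> = \<bar>det2 (app M x) (app M y)\<bar>"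
    unfolding act_app abs_det2_norm1 abs_det2_norm2 ..
  also have "\<dots> = \<bar>det2 x y\<bar>" using det2_app assms(2) by simp
  also have "\<dots> = 1" using assms(1) adj_det by blast
  finally show ?thesis using assms adj_det vertex_act by blast
qed

lemma relpow_act: "(farey_adj ^^ k) x y \<Longrightarrow> mdet M = 1 \<Longrightarrow> (farey_adj ^^ k) (mat2_act M x) (mat2_act M y)"
proof (induction k arbitrary: y)
  case 0 thus ?case by simp
next
  case (Suc k)
  from Suc.prems(1) obtain z where "(farey_adj ^^ k) x z" "farey_adj z y" by (rule relpowp_Suc_E)
  thus ?case using Suc adj_act relpowp_Suc_I by metis
qed

lemma relpow_trans: "(farey_adj ^^ k) x y \<Longrightarrow> (farey_adj ^^ l) y z \<Longrightarrow> (farey_adj ^^ (k+l)) x z"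
  by (auto simp: relpowp_add)

lemma adj_sym: assumes "farey_adj x y" shows "farey_adj y x"
proof -
  have "det2 y x = - det2 x y" by (cases x; cases y; simp add: det2_def)
  hence "\<bar>det2 y x\<bar> = \<bar>det2 x y\<bar>" by simp
  thus ?thesis using assms unfolding adj_det by simp
qed

lemma dist_le: "(farey_adj ^^ k) x y \<Longrightarrow> farey_dist x y \<le> k"
  unfolding farey_dist_def by (rule Least_le)



lemma word_mat_Cons: "word_mat (x # w) = mat2_mult (letter x) (word_mat w)"
  by (simp add: word_mat_def)

lemma word_mat_Nil: "word_mat [] = mat2_id"
  by (simp add: word_mat_def)

lemma word_mat_append: "word_mat (u @ v) = mat2_mult (word_mat u) (word_mat v)"
  by (induction u) (simp_all add: word_mat_Cons word_mat_Nil mult_id mult_assoc)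

definition posm :: "mat2 \<Rightarrow> bool" where
  "posm M = (case M of (a,b,c,d) \<Rightarrow> a \<ge> 1 \<and> d \<ge> 1 \<and> b \<ge> 0 \<and> c \<ge> 0 \<and> a * d - b * c = 1)"

lemma word_pos:
  "case word_mat w of (a,b,c,d) \<Rightarrow> a \<ge> 1 \<and> d \<ge> 1 \<and> b \<ge> 0 \<and> c \<ge> 0 \<and> a * d - b * c = 1
     \<and> (True \<in> set w \<longrightarrow> b \<ge> 1) \<and> (False \<in> set w \<longrightarrow> c \<ge> 1)"
proof (induction w)
  case Nil thus ?case by (simp add: word_mat_Nil mat2_id_def)
next
  case (Cons x w)
  obtain a b c d where W: "word_mat w = (a,b,c,d)" by (cases "word_mat w") auto
  have ih: "a \<ge> 1 \<and> d \<ge> 1 \<and> b \<ge> 0 \<and> c \<ge> 0 \<and> a * d - b * c = 1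
     \<and> (True \<in> set w \<longrightarrow> b \<ge> 1) \<and> (False \<in> set w \<longrightarrow> c \<ge> 1)" using Cons W by simp
  show ?case
  proof (cases x)
    case True
    have "(a + c) * d - (b + d) * c = a * d - b * c" by (simp add: algebra_simps)
    thus ?thesis using ih True
      by (simp add: word_mat_Cons W letter_def matU_def mat2_mult_def)
  next
    case False
    have "a * (b + d) - b * (a + c) = a * d - b * c" by (simp add: algebra_simps)
    thus ?thesis using ih False
      by (simp add: word_mat_Cons W letter_def matV_def mat2_mult_def)
  qed
qed

lemma word_det: "mdet (word_mat w) = 1"
  using word_pos[of w] by (cases "word_mat w") (simp add: mdet_def)

lemma sep_arith:
  fixes a1 b1 a2 b2 :: int
  assumes "a1 * b1 < 0" "a2 * b2 > 0"
  shows "\<bar>a1 * b2 - b1 * a2\<bar> \<ge> 2"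
proof -
  have "(a1 * b2) * (b1 * a2) < 0"
  proof -
    have eq: "(a1 * b2) * (b1 * a2) = (a1 * b1) * (a2 * b2)" by (simp add: algebra_simps)
    have "(a1 * b1) * (a2 * b2) < 0" using assms by (rule mult_neg_pos)
    thus ?thesis unfolding eq .
  qed
  hence "(a1 * b2 > 0 \<and> b1 * a2 < 0) \<or> (a1 * b2 < 0 \<and> b1 * a2 > 0)"
    by (auto simp: mult_less_0_iff)
  thus ?thesis by auto
qed

lemma sep_step:
  assumes "mdet P = 1" "farey_adj x y" "sd P x < 0"
  shows "\<not> sd P y > 0"
proof
  assume y: "sd P y > 0"
  obtain a1 b1 where x1: "cf P x = (a1, b1)" by fastforce
  obtain a2 b2 where y1: "cf P y = (a2, b2)" by fastforce
  have "\<bar>det2 (cf P x) (cf P y)\<bar> = 1" using det2_cf[OF assms(1)] assms(2) adj_det by simp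
  hence "\<bar>a1 * b2 - b1 * a2\<bar> = 1" using x1 y1 by (simp add: det2_def)
  moreover have "\<bar>a1 * b2 - b1 * a2\<bar> \<ge> 2"
    using sep_arith[of a1 b1 a2 b2] assms(3) y x1 y1 by (simp add: sd_def)
  ultimately show False by simp
qed

lemma count_lemma:
  assumes "(farey_adj ^^ k) x y"
    and "\<forall>i\<in>I. mdet (f i) = 1 \<and> sd (f i) x < 0 \<and> sd (f i) y > 0"
    and "\<forall>i\<in>I. \<forall>i'\<in>I. i \<noteq> i' \<longrightarrow> (\<forall>z. farey_vertex z \<longrightarrow> \<not> (sd (f i) z = 0 \<and> sd (f i') z = 0))"
  shows "card I \<le> k"
  using assms
proof (induction k arbitrary: y I)
  case 0
  hence "x = y" by simp
  hence "I = {}" using "0.prems"(2) by fastforce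
  thus ?case by simp
next
  case (Suc k)
  from Suc.prems(1) obtain z where pz: "(farey_adj ^^ k) x z" and zy: "farey_adj z y"
    by (rule relpowp_Suc_E)
  have zv: "farey_vertex z" using zy adj_det by blast
  show ?case
  proof (cases "finite I")
    case False thus ?thesis by simp
  next
    case fin: True
    define I' where "I' = {i\<in>I. sd (f i) z \<noteq> 0}"
    have h1: "\<forall>i\<in>I'. mdet (f i) = 1 \<and> sd (f i) x < 0 \<and> sd (f i) z > 0"
    proof
      fix i assume i: "i \<in> I'"
      hence iI: "i \<in> I" and nz: "sd (f i) z \<noteq> 0" by (auto simp: I'_def)
      have "\<not> sd (f i) z < 0"
      proof
        assume "sd (f i) z < 0"
        hence "\<not> sd (f i) y > 0" using sep_step[of "f i" z y] Suc.prems(2) iI zy by blast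
        thus False using Suc.prems(2) iI by blast
      qed
      thus "mdet (f i) = 1 \<and> sd (f i) x < 0 \<and> sd (f i) z > 0" using nz Suc.prems(2) iI by auto
    qed
    have h2: "\<forall>i\<in>I'. \<forall>i'\<in>I'. i \<noteq> i' \<longrightarrow> (\<forall>z. farey_vertex z \<longrightarrow> \<not> (sd (f i) z = 0 \<and> sd (f i') z = 0))"
      using Suc.prems(3) by (auto simp: I'_def)
    have c1: "card I' \<le> k" by (rule Suc.IH[OF pz h1 h2])
    have "card (I - I') \<le> Suc 0"
    proof (subst card_le_Suc0_iff_eq)
      show "finite (I - I')" using fin by simp
      show "\<forall>a\<in>I - I'. \<forall>b\<in>I - I'. a = b"
      proof (intro ballI)
        fix a b assume "a \<in> I - I'" "b \<in> I - I'"
        hence ab: "a \<in> I" "b \<in> I" "sd (f a) z = 0" "sd (f b) z = 0" by (auto simp: I'_def)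
        show "a = b"
        proof (rule ccontr)
          assume "a \<noteq> b"
          hence "\<not> (sd (f a) z = 0 \<and> sd (f b) z = 0)" using Suc.prems(3) ab(1,2) zv by blast
          thus False using ab by blast
        qed
      qed
    qed
    moreover have "card I \<le> card I' + card (I - I')"
    proof -
      have sub: "I' \<subseteq> I" by (auto simp: I'_def)
      have "card (I - I') = card I - card I'" using fin sub by (simp add: card_Diff_subset finite_subset)
      moreover have "card I' \<le> card I" using fin sub by (rule card_mono)
      ultimately show ?thesis by simp
    qed
    ultimately show ?thesis using c1 by simp
  qed
qed



lemma cf_neg: "cf P (-a, -b) = (- fst (cf P (a,b)), - snd (cf P (a,b)))"
  by (cases P; simp add: cf_def algebra_simps)

lemma sd_norm: "sd P (farey_norm v) = sd P v"
proof -
  obtain a b where v: "v = (a,b)" by fastforce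
  have "sd P (-a,-b) = sd P (a,b)" by (simp add: sd_def cf_neg)
  thus ?thesis using norm_cases[of v] v by auto
qed

lemma vertex_nz: "farey_vertex z \<Longrightarrow> z \<noteq> (0,0)"
  by (auto simp: farey_vertex_def)

lemma qpos_arith:
  fixes q1 q2 q3 q4 al be :: int
  assumes "q1 \<ge> 1" "q2 \<ge> 1" "q3 \<ge> 1" "q4 \<ge> 1" "al * be = 0" "(al, be) \<noteq> (0,0)"
  shows "(q1 * al + q2 * be) * (q3 * al + q4 * be) > 0"
proof (cases "al = 0")
  case True
  hence "be \<noteq> 0" using assms by auto
  hence "be * be > 0" by (cases "be > 0") (auto simp: mult_pos_pos mult_neg_neg)
  moreover have "q2 * q4 > 0" using assms by simp
  moreover have "(q1 * al + q2 * be) * (q3 * al + q4 * be) = (q2 * q4) * (be * be)"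
    using True by (simp add: algebra_simps)
  ultimately show ?thesis by simp
next
  case False
  hence "be = 0" using assms by simp
  have "al * al > 0" using False by (cases "al > 0") (auto simp: mult_pos_pos mult_neg_neg)
  moreover have "q1 * q3 > 0" using assms by simp
  moreover have "(q1 * al + q2 * be) * (q3 * al + q4 * be) = (q1 * q3) * (al * al)"
    using \<open>be = 0\<close> by (simp add: algebra_simps)
  ultimately show ?thesis by simp
qed

lemma take_split: "p \<le> p' \<Longrightarrow> take p' s = take p s @ drop p (take p' s)"
  by (metis append_take_drop_id min.absorb1 take_take)

lemma disj_lemma:
  assumes "p < p'" "True \<in> set (drop p (take p' s))" "False \<in> set (drop p (take p' s))"
    and "farey_vertex z" "sd (word_mat (take p' s)) z = 0"
  shows "sd (word_mat (take p s)) z \<noteq> 0"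
proof -
  define P where "P = word_mat (take p s)"
  define Q where "Q = word_mat (drop p (take p' s))"
  define P' where "P' = word_mat (take p' s)"
  have PQ: "P' = mat2_mult P Q" unfolding P_def Q_def P'_def
    using take_split[of p p' s] assms(1) word_mat_append by (metis less_imp_le)
  obtain al be where c: "cf P' z = (al, be)" by fastforce
  have z: "z = app P' (al, be)" using app_cf[of P' z] c word_det P'_def by simp
  have "(al,be) \<noteq> (0,0)" using z vertex_nz[OF assms(4)] by (cases P'; auto simp: app_def)
  moreover have "al * be = 0" using assms(5) c P'_def by (simp add: sd_def)
  moreover have cfP: "cf P z = app Q (al, be)"
    using z PQ app_mult cf_app word_det P_def by metis
  moreover obtain q1 q2 q3 q4 where Q: "Q = (q1,q2,q3,q4)" by (cases Q) auto
  moreover have "q1 \<ge> 1" "q2 \<ge> 1" "q3 \<ge> 1" "q4 \<ge> 1"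
    using word_pos[of "drop p (take p' s)"] assms(2,3) Q Q_def by auto
  ultimately have "sd P z > 0"
    using qpos_arith[of q1 q2 q3 q4 al be] by (simp add: sd_def app_def)
  thus ?thesis unfolding P_def by simp
qed

lemma family:
  fixes s :: "bool list" and I :: "'i set" and pos :: "'i \<Rightarrow> nat"
  assumes pos_le: "\<forall>i\<in>I. pos i \<le> length s"
    and inj: "\<forall>i\<in>I. \<forall>i'\<in>I. i \<noteq> i' \<longrightarrow> pos i \<noteq> pos i'"
    and pre: "\<forall>i\<in>I. False \<in> set (take (pos i) s) \<and> False \<in> set (drop (pos i) s)"
    and seg: "\<forall>i\<in>I. \<forall>i'\<in>I. pos i < pos i' \<longrightarrow>
          True \<in> set (drop (pos i) (take (pos i') s)) \<and> False \<in> set (drop (pos i) (take (pos i') s))"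
    and path: "(farey_adj ^^ k) (1,0) (farey_norm (app (word_mat s) (1,0)))"
  shows "card I \<le> k"
proof (rule count_lemma[OF path, where f = "\<lambda>i. word_mat (take (pos i) s)"])
  show "\<forall>i\<in>I. mdet (word_mat (take (pos i) s)) = 1 \<and> sd (word_mat (take (pos i) s)) (1, 0) < 0 \<and>
        sd (word_mat (take (pos i) s)) (farey_norm (app (word_mat s) (1, 0))) > 0"
  proof
    fix i assume i: "i \<in> I"
    define P where "P = word_mat (take (pos i) s)"
    define R where "R = word_mat (drop (pos i) s)"
    have S: "word_mat s = mat2_mult P R" unfolding P_def R_def
      by (metis append_take_drop_id word_mat_append)
    obtain a b c d where Pe: "P = (a,b,c,d)" by (cases P) auto
    have "c \<ge> 1" "d \<ge> 1" using word_pos[of "take (pos i) s"] pre i Pe P_def by auto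
    hence s1: "sd P (1,0) < 0" using Pe by (simp add: sd_def cf_def mult_pos_pos)
    obtain r1 r2 r3 r4 where Re: "R = (r1,r2,r3,r4)" by (cases R) auto
    have "r1 \<ge> 1" "r3 \<ge> 1" using word_pos[of "drop (pos i) s"] pre i Re R_def by auto
    moreover have "cf P (app (word_mat s) (1,0)) = app R (1,0)"
      using S app_mult cf_app word_det P_def by metis
    ultimately have s2: "sd P (app (word_mat s) (1,0)) > 0" using Re by (simp add: sd_def app_def)
    show "mdet (word_mat (take (pos i) s)) = 1 \<and> sd (word_mat (take (pos i) s)) (1, 0) < 0 \<and>
        sd (word_mat (take (pos i) s)) (farey_norm (app (word_mat s) (1, 0))) > 0"
      using s1 s2 word_det sd_norm P_def by simp
  qed
  show "\<forall>i\<in>I. \<forall>i'\<in>I. i \<noteq> i' \<longrightarrow> (\<forall>z. farey_vertex z \<longrightarrow>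
        \<not> (sd (word_mat (take (pos i) s)) z = 0 \<and> sd (word_mat (take (pos i') s)) z = 0))"
  proof (intro ballI impI allI notI)
    fix i i' z assume ii: "i \<in> I" "i' \<in> I" "i \<noteq> i'" and zv: "farey_vertex z"
      and both: "sd (word_mat (take (pos i) s)) z = 0 \<and> sd (word_mat (take (pos i') s)) z = 0"
    have "pos i \<noteq> pos i'" using inj ii by blast
    hence "pos i < pos i' \<or> pos i' < pos i" by arith
    thus False
    proof
      assume lt: "pos i < pos i'"
      show False using disj_lemma[OF lt _ _ zv] seg ii lt both by blast
    next
      assume lt: "pos i' < pos i"
      show False using disj_lemma[OF lt _ _ zv] seg ii lt both by blast
    qed
  qed
qed



lemma norm_10: "farey_norm (1,0) = (1,0)"
  by (simp add: farey_norm_def)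

lemma iter_act:
  "(mat2_act (word_mat w) ^^ j) farey_inf = farey_norm (app (word_mat (concat (replicate j w))) (1,0))"
proof (induction j)
  case 0 thus ?case by (simp add: farey_inf_def word_mat_Nil mat2_id_def app_def norm_10)
next
  case (Suc j)
  have "(mat2_act (word_mat w) ^^ Suc j) farey_inf = mat2_act (word_mat w) ((mat2_act (word_mat w) ^^ j) farey_inf)"
    by simp
  also have "\<dots> = farey_norm (app (word_mat w) (app (word_mat (concat (replicate j w))) (1,0)))"
    unfolding Suc.IH by (simp only: act_app act_norm)
  also have "\<dots> = farey_norm (app (word_mat (concat (replicate (Suc j) w))) (1,0))"
    by (simp add: word_mat_append app_mult)
  finally show ?case .
qed

lemma vertex_10: "farey_vertex (1,0)"
  by (simp add: farey_vertex_def)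

lemma path_exists: "\<exists>k. (farey_adj ^^ k) (1,0) (farey_norm (app (word_mat u) (1,0)))"
proof (induction u)
  case Nil thus ?case
    by (rule exI[of _ 0]) (simp add: word_mat_Nil mat2_id_def app_def norm_10)
next
  case (Cons x u)
  then obtain k where k: "(farey_adj ^^ k) (1,0) (farey_norm (app (word_mat u) (1,0)))" by blast
  have det: "mdet (letter x) = 1" by (simp add: letter_def mdet_def matU_def matV_def)
  have k2: "(farey_adj ^^ k) (mat2_act (letter x) (1,0)) (farey_norm (app (word_mat (x # u)) (1,0)))"
    using relpow_act[OF k det] by (simp add: act_app act_norm word_mat_Cons app_mult)
  show ?case
  proof (cases x)
    case True
    have "mat2_act (letter x) (1,0) = (1,0)" using True
      by (simp add: letter_def matU_def mat2_act_def norm_10)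
    thus ?thesis using k2 by auto
  next
    case False
    have "mat2_act (letter x) (1,0) = (1,1)" using False
      by (simp add: letter_def matV_def mat2_act_def farey_norm_def)
    moreover have "farey_adj (1,0) (1,1)" by (simp add: farey_adj_def farey_vertex_def)
    ultimately show ?thesis using k2 relpowp_Suc_I2 by metis
  qed
qed



lemma len_rep: "length (concat (replicate j w)) = j * length w"
  by (induction j) auto

lemma nth_rep: "q < j * length w \<Longrightarrow> concat (replicate j w) ! q = w ! (q mod length w)"
proof (induction j arbitrary: q)
  case 0 thus ?case by simp
next
  case (Suc j)
  show ?case
  proof (cases "q < length w")
    case True thus ?thesis by (simp add: nth_append)
  next
    case False
    hence "q - length w < j * length w" using Suc.prems by simp
    hence "concat (replicate j w) ! (q - length w) = w ! ((q - length w) mod length w)" by (rule Suc.IH)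
    moreover have "(q - length w) mod length w = q mod length w" using False
      by (simp add: mod_if le_mod_geq)
    ultimately show ?thesis using False by (simp add: nth_append)
  qed
qed

lemma in_seg: "p \<le> q \<Longrightarrow> q < p' \<Longrightarrow> p' \<le> length s \<Longrightarrow> s ! q = b \<Longrightarrow> b \<in> set (drop p (take p' s))"
  unfolding in_set_conv_nth
  by (rule exI[of _ "q - p"]) auto

lemma in_take: "q < p \<Longrightarrow> p \<le> length s \<Longrightarrow> s ! q = b \<Longrightarrow> b \<in> set (take p s)"
  unfolding in_set_conv_nth
  by (rule exI[of _ q]) auto

lemma in_drop: "p \<le> q \<Longrightarrow> q < length s \<Longrightarrow> s ! q = b \<Longrightarrow> b \<in> set (drop p s)"
  unfolding in_set_conv_nth
  by (rule exI[of _ "q - p"]) auto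

lemma dist_ge:
  fixes I :: "'i set" and pos :: "'i \<Rightarrow> nat" and w :: "bool list" and j :: nat
  defines "s \<equiv> concat (replicate j w)"
  assumes pos_le: "\<forall>i\<in>I. pos i \<le> length s"
    and inj: "\<forall>i\<in>I. \<forall>i'\<in>I. i \<noteq> i' \<longrightarrow> pos i \<noteq> pos i'"
    and pre: "\<forall>i\<in>I. False \<in> set (take (pos i) s) \<and> False \<in> set (drop (pos i) s)"
    and seg: "\<forall>i\<in>I. \<forall>i'\<in>I. pos i < pos i' \<longrightarrow>
          True \<in> set (drop (pos i) (take (pos i') s)) \<and> False \<in> set (drop (pos i) (take (pos i') s))"
  shows "card I \<le> farey_dist farey_inf ((mat2_act (word_mat w) ^^ j) farey_inf)"
proof -
  let ?y = "farey_norm (app (word_mat s) (1,0))"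
  have "\<exists>k. (farey_adj ^^ k) (1,0) ?y" by (rule path_exists)
  hence "(farey_adj ^^ (farey_dist (1,0) ?y)) (1,0) ?y"
    unfolding farey_dist_def by (rule LeastI_ex)
  hence "card I \<le> farey_dist (1,0) ?y"
    by (rule family[OF pos_le inj pre seg])
  thus ?thesis unfolding iter_act s_def by (simp add: farey_inf_def)
qed

lemma lowA:
  assumes T: "True \<in> set w" and F: "False \<in> set w" and j: "j \<ge> 1"
  shows "j - 1 \<le> farey_dist farey_inf ((mat2_act (word_mat w) ^^ j) farey_inf)"
proof -
  define L where "L = length w"
  define s where "s = concat (replicate j w)"
  obtain tT where tT: "tT < L" "w ! tT = True" using T unfolding in_set_conv_nth L_def by blast
  obtain tF where tF: "tF < L" "w ! tF = False" using F unfolding in_set_conv_nth L_def by blast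
  have L0: "L > 0" using tT by simp
  have ls: "length s = j * L" by (simp add: s_def len_rep L_def)
  have sn: "\<And>q. q < j * L \<Longrightarrow> s ! q = w ! (q mod L)" unfolding s_def L_def by (rule nth_rep)
  have modl: "\<And>i t. t < L \<Longrightarrow> (i * L + t) mod L = t" by simp
  let ?I = "{1..<j}" and ?pos = "\<lambda>i. i * L"
  have "card ?I \<le> farey_dist farey_inf ((mat2_act (word_mat w) ^^ j) farey_inf)"
  proof (rule dist_ge[where pos = ?pos], fold s_def)
    show "\<forall>i\<in>?I. i * L \<le> length s" using ls by auto
    show "\<forall>i\<in>?I. \<forall>i'\<in>?I. i \<noteq> i' \<longrightarrow> i * L \<noteq> i' * L" using L0 by auto
    show "\<forall>i\<in>?I. False \<in> set (take (i * L) s) \<and> False \<in> set (drop (i * L) s)"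
    proof
      fix i assume i: "i \<in> ?I"
      have iL1: "i * L \<ge> L" using mult_le_mono1[of 1 i L] i by simp
      have "i \<le> j - 1" using i by auto
      hence iL2: "i * L \<le> (j - 1) * L" by (rule mult_le_mono1)
      have iL3: "(j - 1) * L + L = j * L" using j by (cases j) auto
      note iL = iL1 iL2 iL3
      have a: "s ! tF = False" using sn[of tF] tF iL by simp
      have b: "s ! ((j - 1) * L + tF) = False" using sn[of "(j - 1) * L + tF"] tF iL modl by simp
      have d1: "i * L \<le> (j - 1) * L + tF" using iL2 by linarith
      have d2: "(j - 1) * L + tF < length s" using iL3 tF ls by linarith
      have d3: "tF < i * L" "i * L \<le> length s" using iL1 iL2 iL3 tF ls by linarith+
      show "False \<in> set (take (i * L) s) \<and> False \<in> set (drop (i * L) s)"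
        using in_take[OF d3 a] in_drop[OF d1 d2 b] by blast
    qed
    show "\<forall>i\<in>?I. \<forall>i'\<in>?I. i * L < i' * L \<longrightarrow>
          True \<in> set (drop (i * L) (take (i' * L) s)) \<and> False \<in> set (drop (i * L) (take (i' * L) s))"
    proof (intro ballI impI)
      fix i i' assume i: "i \<in> ?I" and i': "i' \<in> ?I" and lt: "i * L < i' * L"
      have ii: "i + 1 \<le> i'" using lt by (simp add: Suc_le_eq)
      have b1: "i * L + L \<le> i' * L" using mult_le_mono1[OF ii, of L] by (simp add: algebra_simps)
      have "i' \<le> j" using i' by simp
      hence b2: "i' * L \<le> j * L" by (rule mult_le_mono1)
      have q1: "i * L + tT < j * L" "i * L + tF < j * L" using b1 b2 tT tF by linarith+
      have q2: "i * L + tT < i' * L" "i * L + tF < i' * L" using b1 tT tF by linarith+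
      have sT: "s ! (i * L + tT) = True" using sn[OF q1(1)] tT modl by simp
      have sF: "s ! (i * L + tF) = False" using sn[OF q1(2)] tF modl by simp
      have lenok: "i' * L \<le> length s" using b2 ls by simp
      show "True \<in> set (drop (i * L) (take (i' * L) s)) \<and> False \<in> set (drop (i * L) (take (i' * L) s))"
        using in_seg[OF le_add1 q2(1) lenok sT] in_seg[OF le_add1 q2(2) lenok sF] by blast
    qed
  qed
  thus ?thesis by simp
qed



lemma split_change:
  fixes w :: "bool list"
  shows "True \<in> set w \<Longrightarrow> False \<in> set w \<Longrightarrow> \<exists>A x y B. w = A @ [x, y] @ B \<and> x \<noteq> y"
proof (induction w)
  case Nil thus ?case by simp
next
  case (Cons a w)
  show ?case
  proof (cases w)
    case Nil thus ?thesis using Cons.prems by auto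
  next
    case (Cons b r)
    show ?thesis
    proof (cases "a = b")
      case False
      have "a # w = [] @ [a, b] @ r" using \<open>w = b # r\<close> by simp
      thus ?thesis using False by blast
    next
      case True
      hence "True \<in> set w" "False \<in> set w" using Cons.prems \<open>w = b # r\<close> by auto
      then obtain A x y B where "w = A @ [x, y] @ B" "x \<noteq> y" using Cons.IH by blast
      hence "a # w = (a # A) @ [x, y] @ B" "x \<noteq> y" by simp_all
      thus ?thesis by blast
    qed
  qed
qed

lemma wfacts:
  fixes w :: "bool list"
  assumes "count_list w True \<ge> 2" "count_list w False \<ge> 2"
  shows "\<exists>c. c + 2 \<le> length w \<and> w ! c \<noteq> w ! (c + 1) \<and>
     (\<forall>b. \<exists>t < length w. (t < c \<or> c + 2 \<le> t) \<and> w ! t = b)"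
proof -
  have "True \<in> set w" using assms(1) count_list_0_iff[of w True] by auto
  moreover have "False \<in> set w" using assms(2) count_list_0_iff[of w False] by auto
  ultimately
  obtain A x y B where w: "w = A @ [x, y] @ B" and xy: "x \<noteq> y" using split_change by blast
  have c1: "w ! length A = x" "w ! (length A + 1) = y" using w by (simp_all add: nth_append)
  have "\<forall>b. \<exists>t < length w. (t < length A \<or> length A + 2 \<le> t) \<and> w ! t = b"
  proof
    fix b :: bool
    have "count_list [x, y] b = 1" using xy by (cases b; cases x; cases y) auto
    moreover have "count_list w b = count_list A b + count_list [x, y] b + count_list B b"
      using w by (simp only: count_list_append add.assoc)
    moreover have "count_list w b \<ge> 2" using assms by (cases b) auto
    ultimately have "count_list (A @ B) b \<ge> 1" by simp
    hence "b \<in> set A \<or> b \<in> set B" using count_list_0_iff[of "A @ B" b] by auto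
    thus "\<exists>t < length w. (t < length A \<or> length A + 2 \<le> t) \<and> w ! t = b"
    proof
      assume "b \<in> set A"
      then obtain k where "k < length A" "A ! k = b" by (auto simp: in_set_conv_nth)
      thus ?thesis using w by (intro exI[of _ k]) (auto simp: nth_append)
    next
      assume "b \<in> set B"
      then obtain k where "k < length B" "B ! k = b" by (auto simp: in_set_conv_nth)
      thus ?thesis using w by (intro exI[of _ "length A + 2 + k"]) (auto simp: nth_append)
    qed
  qed
  moreover have "length A + 2 \<le> length w" using w by simp
  ultimately show ?thesis using c1 xy by blast
qed



lemma mulstep: "i < i' \<Longrightarrow> i * L + L \<le> i' * (L::nat)"
  using mult_le_mono1[of "Suc i" i' L] by (simp add: algebra_simps)

lemma lowB:
  assumes cT: "count_list w True \<ge> 2" and cF: "count_list w False \<ge> 2" and j: "j \<ge> 2"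
  shows "2 * (j - 2) \<le> farey_dist farey_inf ((mat2_act (word_mat w) ^^ j) farey_inf)"
proof -
  define L where "L = length w"
  define s where "s = concat (replicate j w)"
  obtain c where c1: "c + 2 \<le> L" and c2: "w ! c \<noteq> w ! (c + 1)"
    and ct: "\<forall>b. \<exists>t < L. (t < c \<or> c + 2 \<le> t) \<and> w ! t = b"
    using wfacts[OF cT cF] unfolding L_def by blast
  obtain tF where tF: "tF < L" "tF < c \<or> c + 2 \<le> tF" "w ! tF = False" using ct by blast
  have L3: "L \<ge> 3" using tF c1 by linarith
  have ls: "length s = j * L" by (simp add: s_def len_rep L_def)
  have sn: "\<And>q. q < j * L \<Longrightarrow> s ! q = w ! (q mod L)" unfolding s_def L_def by (rule nth_rep)
  have modl: "\<And>i t. t < L \<Longrightarrow> (i * L + t) mod L = t" by simp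
  have B3: "(j - 1) * L + L = j * L" using j by (cases j) auto
  let ?I = "{1..<j-1} \<times> {0, 1::nat}" and ?pos = "\<lambda>(i, t). i * L + c + 2 * t"
  have Bd: "\<And>i t. (i, t) \<in> ?I \<Longrightarrow> L \<le> i * L \<and> i * L + L \<le> (j - 1) * L \<and> t \<le> 1"
  proof -
    fix i t assume it: "(i, t) \<in> ?I"
    have "L \<le> i * L" using mult_le_mono1[of 1 i L] it by simp
    moreover have "i * L + L \<le> (j - 1) * L" using mulstep[of i "j - 1" L] it by simp
    ultimately show "L \<le> i * L \<and> i * L + L \<le> (j - 1) * L \<and> t \<le> 1" using it by auto
  qed
  have "card ?I \<le> farey_dist farey_inf ((mat2_act (word_mat w) ^^ j) farey_inf)"
  proof (rule dist_ge[where pos = ?pos], fold s_def)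
    show "\<forall>i\<in>?I. ?pos i \<le> length s"
    proof
      fix p assume p: "p \<in> ?I"
      obtain i t where it: "p = (i, t)" by fastforce
      show "?pos p \<le> length s" using Bd[of i t] p it c1 B3 ls by auto
    qed
    show "\<forall>p\<in>?I. \<forall>p'\<in>?I. p \<noteq> p' \<longrightarrow> ?pos p \<noteq> ?pos p'"
    proof (intro ballI impI)
      fix p p' assume p: "p \<in> ?I" and p': "p' \<in> ?I" and ne: "p \<noteq> p'"
      obtain i t where it: "p = (i, t)" by fastforce
      obtain i' t' where it': "p' = (i', t')" by fastforce
      have t: "t \<le> 1" "t' \<le> 1" using Bd[of i t] Bd[of i' t'] p p' it it' by auto
      consider "i < i'" | "i = i'" | "i' < i" by arith
      thus "?pos p \<noteq> ?pos p'"
      proof cases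
        case 1 thus ?thesis using mulstep[OF 1, of L] t L3 it it' by auto
      next
        case 2 thus ?thesis using ne it it' by auto
      next
        case 3 thus ?thesis using mulstep[OF 3, of L] t L3 it it' by auto
      qed
    qed
    show "\<forall>p\<in>?I. False \<in> set (take (?pos p) s) \<and> False \<in> set (drop (?pos p) s)"
    proof
      fix p assume p: "p \<in> ?I"
      obtain i t where it: "p = (i, t)" by fastforce
      have bd: "L \<le> i * L" "i * L + L \<le> (j - 1) * L" "t \<le> 1" using Bd[of i t] p it by auto
      have a: "s ! tF = False" using sn[of tF] tF bd B3 by simp
      have b: "s ! ((j - 1) * L + tF) = False" using sn[of "(j - 1) * L + tF"] tF B3 modl by simp
      have d1: "?pos p \<le> (j - 1) * L + tF" using bd c1 it by auto
      have d2: "(j - 1) * L + tF < length s" using B3 tF ls by linarith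
      have "tF < i * L" using bd(1) tF(1) by linarith
      moreover have "i * L + c + 2 * t \<le> j * L" using bd(2,3) c1 B3 by linarith
      ultimately have d3: "tF < ?pos p" "?pos p \<le> length s" using ls it by auto
      show "False \<in> set (take (?pos p) s) \<and> False \<in> set (drop (?pos p) s)"
        using in_take[OF d3 a] in_drop[OF d1 d2 b] by blast
    qed
    show "\<forall>p\<in>?I. \<forall>p'\<in>?I. ?pos p < ?pos p' \<longrightarrow>
          True \<in> set (drop (?pos p) (take (?pos p') s)) \<and> False \<in> set (drop (?pos p) (take (?pos p') s))"
    proof (intro ballI impI)
      fix p p' assume p: "p \<in> ?I" and p': "p' \<in> ?I" and lt: "?pos p < ?pos p'"
      obtain i t where it: "p = (i, t)" by fastforce
      obtain i' t' where it': "p' = (i', t')" by fastforce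
      have bd: "L \<le> i * L" "i * L + L \<le> (j - 1) * L" "t \<le> 1" using Bd[of i t] p it by auto
      have bd': "L \<le> i' * L" "i' * L + L \<le> (j - 1) * L" "t' \<le> 1" using Bd[of i' t'] p' it' by auto
      have lens: "?pos p' \<le> length s" using bd' c1 B3 ls it' by auto
      have ex: "\<forall>b. \<exists>q. ?pos p \<le> q \<and> q < ?pos p' \<and> s ! q = b"
      proof
        fix b :: bool
        show "\<exists>q. ?pos p \<le> q \<and> q < ?pos p' \<and> s ! q = b"
        proof (cases "t = 0")
          case True
          have ge: "?pos p' \<ge> i * L + c + 2"
          proof -
            consider "i < i'" | "i = i'" | "i' < i" by arith
            thus ?thesis
            proof cases
              case 1 thus ?thesis using mulstep[OF 1, of L] c1 it' by auto
            next
              case 2 thus ?thesis using lt True it it' bd' by (cases t') auto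
            next
              case 3 thus ?thesis using mulstep[OF 3, of L] lt True L3 bd' it it' by auto
            qed
          qed
          have q1: "i * L + c < j * L" "i * L + (c + 1) < j * L" using ge lens ls lt by linarith+
          have v1: "s ! (i * L + c) = w ! c" using sn[OF q1(1)] modl[of c i] c1 by simp
          have v2: "s ! (i * L + (c + 1)) = w ! (c + 1)" using sn[OF q1(2)] modl[of "c + 1" i] c1 by simp
          have "b = w ! c \<or> b = w ! (c + 1)" using c2 by (cases b; cases "w ! c"; cases "w ! (c + 1)") auto
          thus ?thesis
          proof
            assume "b = w ! c" thus ?thesis using v1 ge True it by (intro exI[of _ "i * L + c"]) auto
          next
            assume "b = w ! (c + 1)" thus ?thesis using v2 ge True it
              by (intro exI[of _ "i * L + (c + 1)"]) auto
          qed
        next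
          case False
          hence t1: "t = 1" using bd by auto
          have ge: "?pos p' \<ge> i * L + L + c"
          proof -
            consider "i < i'" | "i = i'" | "i' < i" by arith
            thus ?thesis
            proof cases
              case 1 thus ?thesis using mulstep[OF 1, of L] c1 it' by auto
            next
              case 2 thus ?thesis using lt t1 it it' bd' by auto
            next
              case 3 thus ?thesis using mulstep[OF 3, of L] lt t1 L3 bd' it it' by auto
            qed
          qed
          obtain tb where tb: "tb < L" "tb < c \<or> c + 2 \<le> tb" "w ! tb = b" using ct by blast
          from tb(2) show ?thesis
          proof
            assume "tb < c"
            have q: "Suc i * L + tb < j * L" using ge lens ls \<open>tb < c\<close> by simp
            have "s ! (Suc i * L + tb) = b" using sn[OF q] modl[of tb "Suc i"] tb by simp
            thus ?thesis using ge \<open>tb < c\<close> c1 t1 it by (intro exI[of _ "Suc i * L + tb"]) auto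
          next
            assume "c + 2 \<le> tb"
            have q: "i * L + tb < j * L" using ge lens ls tb by linarith
            have "s ! (i * L + tb) = b" using sn[OF q] modl[of tb i] tb by simp
            thus ?thesis using ge \<open>c + 2 \<le> tb\<close> tb t1 it by (intro exI[of _ "i * L + tb"]) auto
          qed
        qed
      qed
      obtain qT where qT: "?pos p \<le> qT" "qT < ?pos p'" "s ! qT = True" using ex by blast
      obtain qF where qF: "?pos p \<le> qF" "qF < ?pos p'" "s ! qF = False" using ex by blast
      show "True \<in> set (drop (?pos p) (take (?pos p') s)) \<and> False \<in> set (drop (?pos p) (take (?pos p') s))"
        using in_seg[OF qT(1,2) lens qT(3)] in_seg[OF qF(1,2) lens qF(3)] by blast
    qed
  qed
  moreover have "card ?I = 2 * (j - 2)" by (simp add: card_cartesian_product)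
  ultimately show ?thesis by simp
qed



lemma Um: "word_mat (replicate m True) = (1, int m, 0, 1)"
  by (induction m) (simp_all add: word_mat_Nil word_mat_Cons mat2_id_def letter_def matU_def mat2_mult_def)

lemma Vn: "word_mat (replicate n False) = (1, 0, int n, 1)"
  by (induction n) (simp_all add: word_mat_Nil word_mat_Cons mat2_id_def letter_def matV_def mat2_mult_def)

lemma UmVn: "word_mat (replicate m True @ replicate n False) = (1 + int m * int n, int m, int n, 1)"
  by (simp add: word_mat_append Um Vn mat2_mult_def)

lemma adj1: "farey_adj x y \<Longrightarrow> (farey_adj ^^ Suc 0) x y" by (rule relpowp_Suc_I[where P = farey_adj, OF relpowp_0_I])
lemma adjS: "(farey_adj ^^ n) x y \<Longrightarrow> farey_adj y z \<Longrightarrow> (farey_adj ^^ Suc n) x z"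
  by (rule relpowp_Suc_I[where P = farey_adj])
lemma adjS2: "farey_adj x y \<Longrightarrow> (farey_adj ^^ n) y z \<Longrightarrow> (farey_adj ^^ Suc n) x z"
  by (rule relpowp_Suc_I2[where P = farey_adj])

lemma iter_path:
  assumes "mdet g = 1" "(farey_adj ^^ k) v (mat2_act g v)"
  shows "(farey_adj ^^ (k * j)) v ((mat2_act g ^^ j) v)"
proof (induction j)
  case 0 thus ?case by simp
next
  case (Suc j)
  have "(farey_adj ^^ (k * j)) (mat2_act g v) (mat2_act g ((mat2_act g ^^ j) v))"
    by (rule relpow_act[OF Suc assms(1)])
  hence "(farey_adj ^^ (k + k * j)) v (mat2_act g ((mat2_act g ^^ j) v))"
    by (rule relpow_trans[OF assms(2)])
  thus ?case by simp
qed

lemma iter_adj: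
  assumes "mdet g = 1" "farey_adj x y"
  shows "farey_adj ((mat2_act g ^^ j) x) ((mat2_act g ^^ j) y)"
  by (induction j) (simp_all add: assms adj_act)

lemma up2:
  assumes "n \<ge> 1"
  shows "farey_dist farey_inf ((mat2_act (word_mat (replicate m True @ replicate n False)) ^^ j) farey_inf) \<le> 2 * j"
proof -
  let ?g = "word_mat (replicate m True @ replicate n False)"
  have a1: "farey_adj (1,0) (int m, 1)" by (simp add: farey_adj_def farey_vertex_def)
  have act: "mat2_act ?g (1,0) = (1 + int m * int n, int n)"
    using assms unfolding UmVn by (simp add: mat2_act_def farey_norm_def)
  have "farey_vertex (mat2_act ?g (1,0))" by (rule vertex_act[OF vertex_10 word_det])
  hence cop: "coprime (1 + int m * int n) (int n)" using act by (simp add: farey_vertex_def)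
  have a2: "farey_adj (int m, 1) (1 + int m * int n, int n)"
    using assms cop by (simp add: farey_adj_def farey_vertex_def algebra_simps)
  have "(farey_adj ^^ Suc (Suc 0)) (1,0) (mat2_act ?g (1,0))"
    unfolding act by (rule adjS[OF adj1[OF a1] a2])
  hence "(farey_adj ^^ 2) (1,0) (mat2_act ?g (1,0))" by (simp only: numeral_2_eq_2)
  hence "(farey_adj ^^ (2 * j)) (1,0) ((mat2_act ?g ^^ j) (1,0))"
    by (rule iter_path[OF word_det])
  thus ?thesis unfolding farey_inf_def by (rule dist_le)
qed

lemma up1n:
  shows "farey_dist farey_inf ((mat2_act (word_mat (replicate m True @ replicate 1 False)) ^^ j) farey_inf) \<le> j"
proof -
  let ?g = "word_mat (replicate m True @ replicate 1 False)"
  have act: "mat2_act ?g (1,0) = (1 + int m, 1)"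
    unfolding UmVn by (simp add: mat2_act_def farey_norm_def)
  have "farey_adj (1,0) (1 + int m, 1)" by (simp add: farey_adj_def farey_vertex_def)
  hence "(farey_adj ^^ Suc 0) (1,0) (mat2_act ?g (1,0))" unfolding act by (rule adj1)
  hence "(farey_adj ^^ 1) (1,0) (mat2_act ?g (1,0))" by (simp only: One_nat_def)
  hence "(farey_adj ^^ (1 * j)) (1,0) ((mat2_act ?g ^^ j) (1,0))"
    by (rule iter_path[OF word_det])
  thus ?thesis unfolding farey_inf_def by (intro dist_le) simp
qed

lemma up1m:
  shows "farey_dist farey_inf ((mat2_act (word_mat (replicate 1 True @ replicate n False)) ^^ j) farey_inf) \<le> j + 2"
proof -
  let ?g = "word_mat (replicate 1 True @ replicate n False)"
  have act: "mat2_act ?g (0,1) = (1, 1)"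
    unfolding UmVn by (simp add: mat2_act_def farey_norm_def)
  have a: "farey_adj (0,1) (1, 1)" by (simp add: farey_adj_def farey_vertex_def)
  hence "(farey_adj ^^ Suc 0) (0,1) (mat2_act ?g (0,1))" unfolding act by (rule adj1)
  hence "(farey_adj ^^ 1) (0,1) (mat2_act ?g (0,1))" by (simp only: One_nat_def)
  hence p: "(farey_adj ^^ (1 * j)) (0,1) ((mat2_act ?g ^^ j) (0,1))"
    by (rule iter_path[OF word_det])
  have b: "farey_adj (1,0) (0,1)" by (simp add: farey_adj_def farey_vertex_def)
  have c: "farey_adj ((mat2_act ?g ^^ j) (0,1)) ((mat2_act ?g ^^ j) (1,0))"
    by (rule iter_adj[OF word_det adj_sym[OF b]])
  have "(farey_adj ^^ Suc (1 * j)) (1,0) ((mat2_act ?g ^^ j) (0,1))" by (rule adjS2[OF b p])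
  hence "(farey_adj ^^ Suc (Suc (1 * j))) (1,0) ((mat2_act ?g ^^ j) (1,0))" by (rule adjS[OF _ c])
  hence "farey_dist (1,0) ((mat2_act ?g ^^ j) (1,0)) \<le> Suc (Suc (1 * j))" by (rule dist_le)
  thus ?thesis unfolding farey_inf_def by simp
qed

lemma stable_upper:
  fixes a b :: real
  assumes "\<And>j. real (farey_dist farey_inf ((mat2_act g ^^ j) farey_inf)) \<le> a * real j + b"
  shows "stable_len g \<le> ereal a"
proof -
  let ?f = "\<lambda>j::nat. ereal (real (farey_dist farey_inf ((mat2_act g ^^ j) farey_inf)) / real j)"
  have ev: "eventually (\<lambda>j. ?f j \<le> ereal (a + b / real j)) sequentially"
  proof (rule eventually_sequentiallyI[of 1])
    fix j :: nat assume j: "j \<ge> 1"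
    hence jp: "real j > 0" by simp
    have "real (farey_dist farey_inf ((mat2_act g ^^ j) farey_inf)) / real j \<le> (a * real j + b) / real j"
      using assms[of j] jp by (simp add: divide_right_mono)
    also have "\<dots> = a + b / real j" using jp by (simp add: field_simps)
    finally show "?f j \<le> ereal (a + b / real j)" by simp
  qed
  have lim: "((\<lambda>j::nat. ereal (a + b / real j)) \<longlongrightarrow> ereal a) sequentially"
    by (intro tendsto_ereal) (auto intro!: tendsto_eq_intros lim_const_over_n)
  have "stable_len g = Liminf sequentially ?f" by (simp add: stable_len_def)
  also have "\<dots> \<le> Liminf sequentially (\<lambda>j::nat. ereal (a + b / real j))" by (rule Liminf_mono[OF ev])
  also have "\<dots> = ereal a" by (rule lim_imp_Liminf[OF trivial_limit_sequentially lim])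
  finally show ?thesis .
qed

lemma stable_lower:
  fixes a b :: real
  assumes "\<And>j. j \<ge> 2 \<Longrightarrow> a * real j - b \<le> real (farey_dist farey_inf ((mat2_act g ^^ j) farey_inf))"
  shows "ereal a \<le> stable_len g"
proof -
  let ?f = "\<lambda>j::nat. ereal (real (farey_dist farey_inf ((mat2_act g ^^ j) farey_inf)) / real j)"
  have ev: "eventually (\<lambda>j. ereal (a - b / real j) \<le> ?f j) sequentially"
  proof (rule eventually_sequentiallyI[of 2])
    fix j :: nat assume j: "j \<ge> 2"
    hence jp: "real j > 0" by simp
    have "a - b / real j = (a * real j - b) / real j" using jp by (simp add: field_simps)
    also have "\<dots> \<le> real (farey_dist farey_inf ((mat2_act g ^^ j) farey_inf)) / real j"
      using assms[OF j] jp by (simp add: divide_right_mono)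
    finally show "ereal (a - b / real j) \<le> ?f j" by simp
  qed
  have lim: "((\<lambda>j::nat. ereal (a - b / real j)) \<longlongrightarrow> ereal a) sequentially"
    by (intro tendsto_ereal) (auto intro!: tendsto_eq_intros lim_const_over_n)
  have "ereal a = Liminf sequentially (\<lambda>j::nat. ereal (a - b / real j))"
    by (rule lim_imp_Liminf[OF trivial_limit_sequentially lim, symmetric])
  also have "\<dots> \<le> Liminf sequentially ?f" by (rule Liminf_mono[OF ev])
  also have "\<dots> = stable_len g" by (simp add: stable_len_def)
  finally show ?thesis .
qed



theorem mainTheorem10:
  fixes m n :: nat
  assumes "m \<ge> 1" and "n \<ge> 1"
  shows "(\<forall>w. count_list w True = m \<and> count_list w False = n \<longrightarrow>
            stable_len (word_mat (replicate m True @ replicate n False)) \<le> stable_len (word_mat w))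
         \<and> stable_len (word_mat (replicate m True @ replicate n False)) \<le> 2"
proof -
  let ?g = "word_mat (replicate m True @ replicate n False)"
  have up2': "stable_len ?g \<le> ereal 2"
  proof (rule stable_upper[where b = 0])
    fix j
    show "real (farey_dist farey_inf ((mat2_act ?g ^^ j) farey_inf)) \<le> 2 * real j + 0"
      using up2[OF assms(2), where m=m and j=j] by simp
  qed
  have up1': "m = 1 \<or> n = 1 \<Longrightarrow> stable_len ?g \<le> ereal 1"
  proof -
    assume "m = 1 \<or> n = 1"
    thus "stable_len ?g \<le> ereal 1"
    proof
      assume m1: "m = 1"
      show ?thesis
      proof (rule stable_upper[where b = 2])
        fix j
        show "real (farey_dist farey_inf ((mat2_act ?g ^^ j) farey_inf)) \<le> 1 * real j + 2"
          using up1m[where n=n and j=j] m1 by simp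
      qed
    next
      assume n1: "n = 1"
      show ?thesis
      proof (rule stable_upper[where b = 0])
        fix j
        show "real (farey_dist farey_inf ((mat2_act ?g ^^ j) farey_inf)) \<le> 1 * real j + 0"
          using up1n[where m=m and j=j] n1 by simp
      qed
    qed
  qed
  have low: "stable_len ?g \<le> stable_len (word_mat w)"
    if cw: "count_list w True = m \<and> count_list w False = n" for w
  proof -
    have T: "True \<in> set w" using cw assms count_list_0_iff[of w True] by auto
    have F: "False \<in> set w" using cw assms count_list_0_iff[of w False] by auto
    have l1: "ereal 1 \<le> stable_len (word_mat w)"
    proof (rule stable_lower[where b = 1])
      fix j :: nat assume j: "j \<ge> 2"
      have "j - 1 \<le> farey_dist farey_inf ((mat2_act (word_mat w) ^^ j) farey_inf)"
        using lowA[OF T F] j by simp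
      hence "real (j - 1) \<le> real (farey_dist farey_inf ((mat2_act (word_mat w) ^^ j) farey_inf))"
        by (rule of_nat_mono)
      moreover have "real (j - 1) = real j - 1" using j by (simp add: of_nat_diff)
      ultimately show "1 * real j - 1 \<le> real (farey_dist farey_inf ((mat2_act (word_mat w) ^^ j) farey_inf))"
        by simp
    qed
    show ?thesis
    proof (cases "m = 1 \<or> n = 1")
      case True
      thus ?thesis using up1'[OF True] l1 by (rule_tac order_trans) auto
    next
      case False
      hence m2: "count_list w True \<ge> 2" and n2: "count_list w False \<ge> 2" using cw assms by auto
      have "ereal 2 \<le> stable_len (word_mat w)"
      proof (rule stable_lower[where b = 4])
        fix j :: nat assume j: "j \<ge> 2"
        have "2 * (j - 2) \<le> farey_dist farey_inf ((mat2_act (word_mat w) ^^ j) farey_inf)"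
          by (rule lowB[OF m2 n2 j])
        hence "real (2 * (j - 2)) \<le> real (farey_dist farey_inf ((mat2_act (word_mat w) ^^ j) farey_inf))"
          by (rule of_nat_mono)
        moreover have "real (2 * (j - 2)) = 2 * real j - 4" using j by (simp add: of_nat_diff)
        ultimately show "2 * real j - 4 \<le> real (farey_dist farey_inf ((mat2_act (word_mat w) ^^ j) farey_inf))"
          by simp
      qed
      thus ?thesis using up2' by (rule_tac order_trans) auto
    qed
  qed
  show ?thesis using low up2' by auto
qed


end
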